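(* Let $G=(X,b,m,c)$ be a weighted graph, $p\in(1,\infty)$ and $o\in X$. Let $f\in D^p$ and let $(f_n)$ be a sequence in $D^p$. If $f_n\to f$ pointwise and $\limsup_{n\to\infty}\mathcal{E}_p(f_n)\le\mathcal{E}_p(f)$, then $\|f_n-f\|_{o,p}\to0$.
   Context: Weighted graph $G=(X,b,m,c)$: $X$ countably infinite; $b$ symmetric, nonnegative, zero on the diagonal, $\sum_yb(x,y)<\infty$; $m>0$; $c\colon X\to[0,\infty)$; $x\sim y$ iff $b(x,y)>0$; $X$ connected. $\mathcal{E}_p(f)=\frac12\sum_{x,y}b(x,y)|f(x)-f(y)|^p+\sum_xc(x)|f(x)|^p$, $D^p=\{f:\mathcal{E}_p(f)<\infty\}$, $\|f\|_{o,p}=(\mathcal{E}_p(f)+|f(o)|^p)^{1/p}$. *)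

theory Defs
  imports "HOL-Analysis.Analysis" "HOL-Library.Countable" "HOL-Library.Liminf_Limsup"
begin

definition weighted_graph ::
  "('a::countable \<Rightarrow> 'a \<Rightarrow> real) \<Rightarrow> ('a \<Rightarrow> real) \<Rightarrow> ('a \<Rightarrow> real) \<Rightarrow> bool" where
  "weighted_graph b m c \<longleftrightarrow>
     infinite (UNIV :: 'a set) \<and>
     (\<forall>x y. b x y = b y x) \<and> (\<forall>x y. 0 \<le> b x y) \<and> (\<forall>x. b x x = 0) \<and>
     (\<forall>x. (\<lambda>y. b x y) summable_on UNIV) \<and>
     (\<forall>x. 0 < m x) \<and> (\<forall>x. 0 \<le> c x) \<and>
     (\<forall>x y. (x, y) \<in> {(u, v). 0 < b u v}\<^sup>*)"

definition in_Dp :: "('a \<Rightarrow> 'a \<Rightarrow> real) \<Rightarrow> ('a \<Rightarrow> real) \<Rightarrow> real \<Rightarrow> ('a \<Rightarrow> real) \<Rightarrow> bool" where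
  "in_Dp b c p f \<longleftrightarrow>
     (\<lambda>(x, y). b x y * \<bar>f x - f y\<bar> powr p) summable_on UNIV \<and>
     (\<lambda>x. c x * \<bar>f x\<bar> powr p) summable_on UNIV"

definition energy :: "('a \<Rightarrow> 'a \<Rightarrow> real) \<Rightarrow> ('a \<Rightarrow> real) \<Rightarrow> real \<Rightarrow> ('a \<Rightarrow> real) \<Rightarrow> real" where
  "energy b c p f =
     (1/2) * (\<Sum>\<^sub>\<infinity>(x, y)\<in>UNIV. b x y * \<bar>f x - f y\<bar> powr p)
     + (\<Sum>\<^sub>\<infinity>x\<in>UNIV. c x * \<bar>f x\<bar> powr p)"

definition norm_op :: "('a \<Rightarrow> 'a \<Rightarrow> real) \<Rightarrow> ('a \<Rightarrow> real) \<Rightarrow> real \<Rightarrow> 'a \<Rightarrow> ('a \<Rightarrow> real) \<Rightarrow> real" where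
  "norm_op b c p v0 f = (energy b c p f + \<bar>f v0\<bar> powr p) powr (1 / p)"

end

theory Submission
  imports Defs
begin

lemma powr_diff_ineq:
  fixes x y p :: real
  assumes p: "1 \<le> p"
  shows "\<bar>x - y\<bar> powr p \<le> 2 powr (p-1) * (\<bar>x\<bar> powr p + \<bar>y\<bar> powr p)"
proof -
  let ?a = "\<bar>x\<bar>" and ?b = "\<bar>y\<bar>"
  have m: "((?a + ?b)/2) powr p \<le> (?a powr p + ?b powr p)/2"
  proof (cases "?a = 0 \<or> ?b = 0")
    case True
    have g: "2 powr 1 \<le> (2::real) powr p" using p by (intro powr_mono) auto
    have "\<And>t::real. t \<ge> 0 \<Longrightarrow> (t/2) powr p \<le> t powr p / 2"
    proof -
      fix t :: real assume t: "t \<ge> 0"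
      have "(t/2) powr p = t powr p / 2 powr p" using t by (simp add: powr_divide)
      also have "\<dots> \<le> t powr p / 2" using g by (intro divide_left_mono) auto
      finally show "(t/2) powr p \<le> t powr p / 2" .
    qed
    then show ?thesis using True p by auto
  next
    case False
    hence pos: "?a \<in> {0<..}" "?b \<in> {0<..}" by auto
    have "((1 - 1/2) *\<^sub>R ?a + (1/2) *\<^sub>R ?b) powr p \<le> (1 - 1/2) * ?a powr p + (1/2) * ?b powr p"
      by (rule convex_onD[OF powr_convex[OF p]]) (use pos in auto)
    then show ?thesis by (simp add: field_simps)
  qed
  have "\<bar>x - y\<bar> powr p \<le> (?a + ?b) powr p" by (intro powr_mono2) (use p in auto)
  also have "(?a + ?b) powr p = 2 powr p * ((?a + ?b)/2) powr p"
  proof -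
    have "(2 * ((?a + ?b)/2)) powr p = 2 powr p * ((?a + ?b)/2) powr p"
      by (rule powr_mult)
    moreover have "2 * ((?a + ?b)/2) = ?a + ?b" by simp
    ultimately show ?thesis by metis
  qed
  also have "\<dots> \<le> 2 powr p * ((?a powr p + ?b powr p)/2)"
    using m by (intro mult_left_mono) auto
  also have "2 powr p = 2 * 2 powr (p-1)" by (simp add: powr_diff)
  finally show ?thesis by simp
qed

lemma summable_on_diff_real:
  fixes f g :: "'i \<Rightarrow> real"
  assumes "f summable_on A" "g summable_on A"
  shows "(\<lambda>x. f x - g x) summable_on A"
  using summable_on_add[OF assms(1) summable_on_uminus[THEN iffD2, OF assms(2)]] by simp

lemma infsum_diff_real:
  fixes f g :: "'i \<Rightarrow> real"
  assumes "f summable_on A" "g summable_on A"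
  shows "infsum (\<lambda>x. f x - g x) A = infsum f A - infsum g A"
  using infsum_add[OF assms(1) summable_on_uminus[THEN iffD2, OF assms(2)]] by (simp add: infsum_uminus)

lemma diff_summable:
  fixes w :: "'i \<Rightarrow> real" and v u :: "'i \<Rightarrow> real"
  assumes p: "1 \<le> p" and w: "\<And>i. 0 \<le> w i"
   and s1: "(\<lambda>i. w i * \<bar>v i\<bar> powr p) summable_on UNIV"
   and s2: "(\<lambda>i. w i * \<bar>u i\<bar> powr p) summable_on UNIV"
  shows "(\<lambda>i. w i * \<bar>v i - u i\<bar> powr p) summable_on UNIV"
proof (rule summable_on_comparison_test)
  show "(\<lambda>i. 2 powr (p-1) * (w i * \<bar>v i\<bar> powr p) + 2 powr (p-1) * (w i * \<bar>u i\<bar> powr p)) summable_on UNIV"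
    by (intro summable_on_add summable_on_cmult_right s1 s2)
  fix i
  show "w i * \<bar>v i - u i\<bar> powr p \<le> 2 powr (p-1) * (w i * \<bar>v i\<bar> powr p) + 2 powr (p-1) * (w i * \<bar>u i\<bar> powr p)"
    using mult_left_mono[OF powr_diff_ineq[OF p, of "v i" "u i"] w[of i]] by (simp add: algebra_simps)
  show "0 \<le> w i * \<bar>v i - u i\<bar> powr p" using w[of i] by simp
qed

lemma core:
  fixes w :: "'i \<Rightarrow> real" and u :: "nat \<Rightarrow> 'i \<Rightarrow> real" and u0 :: "'i \<Rightarrow> real"
  assumes p: "1 \<le> p" and w: "\<And>i. 0 \<le> w i"
   and lim: "\<And>i. (\<lambda>n. u n i) \<longlonglongrightarrow> u0 i"
   and s0: "(\<lambda>i. w i * \<bar>u0 i\<bar> powr p) summable_on UNIV"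
   and sn: "\<And>n. (\<lambda>i. w i * \<bar>u n i\<bar> powr p) summable_on UNIV"
   and d: "\<delta> > 0"
  shows "eventually (\<lambda>n. (\<Sum>\<^sub>\<infinity>i. w i * \<bar>u n i - u0 i\<bar> powr p)
     \<le> 2 powr (p-1) * (\<Sum>\<^sub>\<infinity>i. w i * \<bar>u n i\<bar> powr p) - 2 powr (p-1) * (\<Sum>\<^sub>\<infinity>i. w i * \<bar>u0 i\<bar> powr p)
       + (2 * 2 powr (p-1) + 1) * \<delta>) sequentially"
proof -
  define C :: real where "C = 2 powr (p-1)"
  have C0: "C > 0" unfolding C_def by simp
  define a where "a i = w i * \<bar>u0 i\<bar> powr p" for i
  define s where "s n i = w i * \<bar>u n i\<bar> powr p" for n i
  define t where "t n i = w i * \<bar>u n i - u0 i\<bar> powr p" for n i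
  define h where "h n i = C * s n i + C * a i - t n i" for n i
  define S where "S = (\<Sum>\<^sub>\<infinity>i. a i)"
  have "(a has_sum S) UNIV" using s0 unfolding S_def a_def by (simp add: summable_iff_has_sum_infsum[symmetric])
  hence "(sum a \<longlongrightarrow> S) (finite_subsets_at_top UNIV)" by (simp add: has_sum_def)
  hence "eventually (\<lambda>F. S - \<delta> < sum a F) (finite_subsets_at_top UNIV)"
    using d by (intro order_tendstoD(1)) auto
  then obtain F where F: "finite F" "S - \<delta> < sum a F"
    unfolding eventually_finite_subsets_at_top by blast
  have hlim: "(\<lambda>n. h n i) \<longlonglongrightarrow> C * a i + C * a i" for i
  proof -
    have T1: "(\<lambda>n. \<bar>u n i\<bar> powr p) \<longlonglongrightarrow> \<bar>u0 i\<bar> powr p"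
      using p by (intro tendsto_intros lim) auto
    have T2: "(\<lambda>n. \<bar>u n i - u0 i\<bar> powr p) \<longlonglongrightarrow> \<bar>u0 i - u0 i\<bar> powr p"
      using p by (intro tendsto_intros lim) auto
    have "(\<lambda>n. C * (w i * \<bar>u n i\<bar> powr p) + C * a i - w i * \<bar>u n i - u0 i\<bar> powr p)
        \<longlonglongrightarrow> C * (w i * \<bar>u0 i\<bar> powr p) + C * a i - w i * \<bar>u0 i - u0 i\<bar> powr p"
      by (intro tendsto_diff tendsto_add tendsto_mult_left T1 T2 tendsto_const)
    then show ?thesis using p unfolding h_def s_def t_def a_def by simp
  qed
  have "(\<lambda>n. sum (h n) F) \<longlonglongrightarrow> (\<Sum>i\<in>F. C * a i + C * a i)"
    by (intro tendsto_sum hlim)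
  hence ev1: "eventually (\<lambda>n. (\<Sum>i\<in>F. C * a i + C * a i) - \<delta> < sum (h n) F) sequentially"
    using d by (intro order_tendstoD(1)) auto
  show ?thesis
  proof (rule eventually_mono[OF ev1])
    fix n assume A: "(\<Sum>i\<in>F. C * a i + C * a i) - \<delta> < sum (h n) F"
    have ss: "s n summable_on UNIV" using sn unfolding s_def by simp
    have sa: "a summable_on UNIV" using s0 unfolding a_def by simp
    have st: "t n summable_on UNIV" unfolding t_def by (rule diff_summable[OF p w sn s0])
    have hnn: "h n i \<ge> 0" for i
      using mult_left_mono[OF powr_diff_ineq[OF p, of "u n i" "u0 i"] w[of i]]
      unfolding h_def s_def t_def a_def C_def by (simp add: algebra_simps)
    have hs: "h n summable_on UNIV" unfolding h_def
      by (intro summable_on_add summable_on_cmult_right ss sa summable_on_diff_real st)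
    have "sum (h n) F \<le> infsum (h n) UNIV"
      by (rule finite_sum_le_infsum[OF hs F(1)]) (use hnn in auto)
    also have "infsum (h n) UNIV = C * infsum (s n) UNIV + C * S - infsum (t n) UNIV"
    proof -
      have "infsum (h n) UNIV = infsum (\<lambda>i. C * s n i + C * a i) UNIV - infsum (t n) UNIV"
        unfolding h_def by (rule infsum_diff_real) (intro summable_on_add summable_on_cmult_right ss sa st)+
      also have "infsum (\<lambda>i. C * s n i + C * a i) UNIV = C * infsum (s n) UNIV + C * S"
        unfolding S_def
        by (subst infsum_add) (auto intro: summable_on_cmult_right ss sa simp: infsum_cmult_right')
      finally show ?thesis .
    qed
    finally have B: "sum (h n) F \<le> C * infsum (s n) UNIV + C * S - infsum (t n) UNIV" .
    have "(\<Sum>i\<in>F. C * a i + C * a i) = 2 * C * sum a F" by (simp add: sum_distrib_left mult.assoc)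
    hence "infsum (t n) UNIV \<le> C * infsum (s n) UNIV + C * S - 2 * C * sum a F + \<delta>" using A B by linarith
    also have "\<dots> \<le> C * infsum (s n) UNIV + C * S - 2 * C * (S - \<delta>) + \<delta>"
      using F(2) C0 by (simp add: mult_left_mono)
    finally show "(\<Sum>\<^sub>\<infinity>i. w i * \<bar>u n i - u0 i\<bar> powr p)
     \<le> 2 powr (p-1) * (\<Sum>\<^sub>\<infinity>i. w i * \<bar>u n i\<bar> powr p) - 2 powr (p-1) * (\<Sum>\<^sub>\<infinity>i. w i * \<bar>u0 i\<bar> powr p)
       + (2 * 2 powr (p-1) + 1) * \<delta>"
      unfolding t_def s_def S_def a_def C_def by (simp add: algebra_simps)
  qed
qed

theorem lemma2p4:
  fixes b :: "'a::countable \<Rightarrow> 'a \<Rightarrow> real" and m c :: "'a \<Rightarrow> real"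
    and p :: real and v0 :: 'a and f :: "'a \<Rightarrow> real" and fs :: "nat \<Rightarrow> 'a \<Rightarrow> real"
  assumes "weighted_graph b m c"
    and "1 < p"
    and "in_Dp b c p f"
    and "\<forall>n. in_Dp b c p (fs n)"
    and "\<forall>x. (\<lambda>n. fs n x) \<longlonglongrightarrow> f x"
    and "limsup (\<lambda>n. ereal (energy b c p (fs n))) \<le> ereal (energy b c p f)"
  shows "(\<lambda>n. norm_op b c p v0 (fs n - f)) \<longlonglongrightarrow> 0"
proof -
  have p1: "1 \<le> p" using assms(2) by simp
  have bnn: "\<And>x y. 0 \<le> b x y" and cnn: "\<And>x. 0 \<le> c x"
    using assms(1) unfolding weighted_graph_def by auto
  define C :: real where "C = 2 powr (p-1)"
  define K :: real where "K = 2 * C + 1"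
  have C0: "C > 0" unfolding C_def by simp
  have K0: "K > 0" using C0 unfolding K_def by simp
  define P where "P g = (\<Sum>\<^sub>\<infinity>(x, y)\<in>UNIV. b x y * \<bar>g x - g y\<bar> powr p)" for g :: "'a \<Rightarrow> real"
  define V where "V g = (\<Sum>\<^sub>\<infinity>x\<in>UNIV. c x * \<bar>g x\<bar> powr p)" for g :: "'a \<Rightarrow> real"
  have Eeq: "energy b c p g = P g / 2 + V g" for g unfolding energy_def P_def V_def by simp
  have Enn: "energy b c p g \<ge> 0" for g
  proof -
    have "P g \<ge> 0" unfolding P_def by (intro infsum_nonneg) (use bnn in auto)
    moreover have "V g \<ge> 0" unfolding V_def by (intro infsum_nonneg) (use cnn in auto)
    ultimately show ?thesis unfolding Eeq by simp
  qed
  have Elim: "(\<lambda>n. energy b c p (fs n - f)) \<longlonglongrightarrow> 0"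
  proof (rule order_tendstoI)
    fix a :: real assume "a < 0"
    then show "eventually (\<lambda>n. a < energy b c p (fs n - f)) sequentially"
      using Enn by (intro always_eventually) (auto intro: less_le_trans)
  next
    fix \<epsilon> :: real assume e: "0 < \<epsilon>"
    define \<delta> where "\<delta> = \<epsilon> / (C + 2 * K + 1)"
    have d: "\<delta> > 0" unfolding \<delta>_def using e C0 K0 by simp
    have de: "(C + 2 * K + 1) * \<delta> = \<epsilon>" unfolding \<delta>_def using C0 K0 by simp
    have ev1: "eventually (\<lambda>n. P (fs n - f) \<le> C * P (fs n) - C * P f + K * \<delta>) sequentially"
    proof -
      have "eventually (\<lambda>n. (\<Sum>\<^sub>\<infinity>i. case_prod b i * \<bar>(\<lambda>(x,y). fs n x - fs n y) i - (\<lambda>(x,y). f x - f y) i\<bar> powr p)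
         \<le> 2 powr (p-1) * (\<Sum>\<^sub>\<infinity>i. case_prod b i * \<bar>(\<lambda>(x,y). fs n x - fs n y) i\<bar> powr p)
          - 2 powr (p-1) * (\<Sum>\<^sub>\<infinity>i. case_prod b i * \<bar>(\<lambda>(x,y). f x - f y) i\<bar> powr p)
         + (2 * 2 powr (p-1) + 1) * \<delta>) sequentially"
      proof (rule core[OF p1 _ _ _ _ d])
        show "\<And>i. 0 \<le> case_prod b i" using bnn by auto
        show "\<And>i. (\<lambda>n. (\<lambda>(x,y). fs n x - fs n y) i) \<longlonglongrightarrow> (\<lambda>(x,y). f x - f y) i"
          using assms(5) by (auto intro!: tendsto_diff)
        show "(\<lambda>i. case_prod b i * \<bar>(\<lambda>(x,y). f x - f y) i\<bar> powr p) summable_on UNIV"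
          using assms(3) unfolding in_Dp_def by (simp add: case_prod_unfold)
        show "\<And>n. (\<lambda>i. case_prod b i * \<bar>(\<lambda>(x,y). fs n x - fs n y) i\<bar> powr p) summable_on UNIV"
          using assms(4) unfolding in_Dp_def by (simp add: case_prod_unfold)
      qed
      moreover have "(\<lambda>i. case_prod b i * \<bar>(\<lambda>(x,y). fs n x - fs n y) i - (\<lambda>(x,y). f x - f y) i\<bar> powr p)
          = (\<lambda>(x, y). b x y * \<bar>(fs n - f) x - (fs n - f) y\<bar> powr p)" for n
        by (auto simp: fun_eq_iff algebra_simps)
      moreover have "(\<lambda>i. case_prod b i * \<bar>(\<lambda>(x,y). g x - g y) i\<bar> powr p)
          = (\<lambda>(x, y). b x y * \<bar>g x - g y\<bar> powr p)" for g :: "'a \<Rightarrow> real"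
        by (auto simp: fun_eq_iff)
      ultimately show ?thesis unfolding P_def C_def K_def by simp
    qed
    have ev2: "eventually (\<lambda>n. V (fs n - f) \<le> C * V (fs n) - C * V f + K * \<delta>) sequentially"
    proof -
      have "eventually (\<lambda>n. (\<Sum>\<^sub>\<infinity>i. c i * \<bar>fs n i - f i\<bar> powr p)
         \<le> 2 powr (p-1) * (\<Sum>\<^sub>\<infinity>i. c i * \<bar>fs n i\<bar> powr p)
          - 2 powr (p-1) * (\<Sum>\<^sub>\<infinity>i. c i * \<bar>f i\<bar> powr p)
         + (2 * 2 powr (p-1) + 1) * \<delta>) sequentially"
      proof (rule core[OF p1 _ _ _ _ d])
        show "\<And>i. 0 \<le> c i" using cnn by auto
        show "\<And>i. (\<lambda>n. fs n i) \<longlonglongrightarrow> f i" using assms(5) by auto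
        show "(\<lambda>i. c i * \<bar>f i\<bar> powr p) summable_on UNIV"
          using assms(3) unfolding in_Dp_def by simp
        show "\<And>n. (\<lambda>i. c i * \<bar>fs n i\<bar> powr p) summable_on UNIV"
          using assms(4) unfolding in_Dp_def by simp
      qed
      then show ?thesis unfolding V_def C_def K_def by simp
    qed
    have "limsup (\<lambda>n. ereal (energy b c p (fs n))) < ereal (energy b c p f + \<delta>)"
      by (rule le_less_trans[OF assms(6)]) (use d in simp)
    hence ev3: "eventually (\<lambda>n. energy b c p (fs n) < energy b c p f + \<delta>) sequentially"
      by (auto dest: Limsup_lessD)
    show "eventually (\<lambda>n. energy b c p (fs n - f) < \<epsilon>) sequentially"
    proof (rule eventually_mono[OF eventually_conj[OF ev1 eventually_conj[OF ev2 ev3]]])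
      fix n assume H: "P (fs n - f) \<le> C * P (fs n) - C * P f + K * \<delta> \<and>
         V (fs n - f) \<le> C * V (fs n) - C * V f + K * \<delta> \<and>
         energy b c p (fs n) < energy b c p f + \<delta>"
      have "energy b c p (fs n - f) \<le> C * (energy b c p (fs n) - energy b c p f) + 2 * K * \<delta>"
        using H mult_pos_pos[OF K0 d] unfolding Eeq by (simp add: algebra_simps)
      also have "\<dots> < C * \<delta> + 2 * K * \<delta>" using H C0 by simp
      also have "\<dots> < \<epsilon>" using de d by (simp add: algebra_simps)
      finally show "energy b c p (fs n - f) < \<epsilon>" .
    qed
  qed
  have "(\<lambda>n. \<bar>(fs n - f) v0\<bar> powr p) \<longlonglongrightarrow> 0"
  proof (rule tendsto_zero_powrI)
    have "(\<lambda>n. fs n v0 - f v0) \<longlonglongrightarrow> f v0 - f v0" using assms(5) by (intro tendsto_diff) auto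
    then have "(\<lambda>n. \<bar>fs n v0 - f v0\<bar>) \<longlonglongrightarrow> 0" using tendsto_rabs_zero by fastforce
    then show "(\<lambda>n. \<bar>(fs n - f) v0\<bar>) \<longlonglongrightarrow> 0" by simp
  qed (use assms(2) in auto)
  with Elim have "(\<lambda>n. energy b c p (fs n - f) + \<bar>(fs n - f) v0\<bar> powr p) \<longlonglongrightarrow> 0 + 0"
    by (rule tendsto_add)
  then have "(\<lambda>n. (energy b c p (fs n - f) + \<bar>(fs n - f) v0\<bar> powr p) powr (1/p)) \<longlonglongrightarrow> 0"
    by (intro tendsto_zero_powrI) (use Enn assms(2) in auto)
  then show ?thesis unfolding norm_op_def .
qed

end
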